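(* There exists an absolute constant $C_2>0$ such that for every $\delta_0>0$ the following holds: if $\|\mathcal T-\mathcal S\|_{\mathrm{op}}<\delta_0$ and $x\in\mathbb C^n$ satisfies $$d(x,\mathcal G)\le\frac{16-5C_2\delta_0}{192+4C_2\delta_0}\,\|x^\natural\|,$$ then $x^+$ is a critical point of $f$ if and only if $x^+$ is a global minimizer of $f$.
   Context: Let $n,m\ge 1$, $a_1,\dots,a_m\in\mathbb C^n$ and $x^\natural\in\mathbb C^n$ with $x^\natural\ne0$. For $a,b\in\mathbb C^n$ write $\langle a,b\rangle=\sum_{j}a_j\overline{b_j}$ and let $\|\cdot\|$ be the Euclidean norm. Let $y_i=|\langle a_i,x^\natural\rangle|^2$. For $v\in\mathbb C^n$ put $v^+=(\mathrm{Re}\,v,\mathrm{Im}\,v)\in\mathbb R^{2n}$; $x$ and $x^+$ always correspond. Define $f:\mathbb R^{2n}\to\mathbb R$ by $f(x^+)=\sum_{i=1}^m\big(|\langle a_i,x\rangle|^2-y_i\big)^2$. Let $\mathcal G$ be the set of global minimizers of $f$ (viewed in $\mathbb C^n$) and $d(x,\mathcal G)$ the Euclidean distance from $x$ to $\mathcal G$. Fix $\sigma>0$ (in the paper, $\sigma^2=\mathrm{Var}((a_i^+)_1)$ for random measurement vectors), set $c=m\sigma^4$. Define the order-4 tensors on $\mathbb R^{2n}$: $\mathcal T=\frac1c\sum_{i=1}^m(a_i^+)^{\otimes 4}$ and $\mathcal S_{i_1i_2i_3i_4}=\mathbf 1_{i_1=i_2,\,i_3=i_4}+\mathbf 1_{i_1=i_3,\,i_2=i_4}+\mathbf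 1_{i_1=i_4,\,i_2=i_3}$, and $\|\mathcal R\|_{\mathrm{op}}=\sup\{\langle \mathcal R,u_1\otimes u_2\otimes u_3\otimes u_4\rangle:\ u_j\in\mathbb R^{2n},\ \|u_1\|\|u_2\|\|u_3\|\|u_4\|=1\}$ (tensor inner product = sum of entrywise products). *)

theory Defs
  imports Complex_Main
begin

text \<open>Vectors in C^n are represented as functions nat => complex, of which only the
coordinates 0..n-1 matter; vectors in R^(2n) as functions nat => real, of which only
the coordinates 0..2n-1 matter.  This explicit-carrier encoding is needed because
the constant C2 must be independent of n.\<close>

definition cinner :: "nat \<Rightarrow> (nat \<Rightarrow> complex) \<Rightarrow> (nat \<Rightarrow> complex) \<Rightarrow> complex" where
  "cinner n u v = (\<Sum>j<n. u j * cnj (v j))"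

definition cnorm :: "nat \<Rightarrow> (nat \<Rightarrow> complex) \<Rightarrow> real" where
  "cnorm n u = sqrt (\<Sum>j<n. (cmod (u j))\<^sup>2)"

definition rnorm :: "nat \<Rightarrow> (nat \<Rightarrow> real) \<Rightarrow> real" where
  "rnorm d u = sqrt (\<Sum>k<d. (u k)\<^sup>2)"

definition plusv :: "nat \<Rightarrow> (nat \<Rightarrow> complex) \<Rightarrow> (nat \<Rightarrow> real)" where
  "plusv n v = (\<lambda>k. if k < n then Re (v k) else if k < 2*n then Im (v (k - n)) else 0)"

definition unplus :: "nat \<Rightarrow> (nat \<Rightarrow> real) \<Rightarrow> (nat \<Rightarrow> complex)" where
  "unplus n w = (\<lambda>j. if j < n then Complex (w j) (w (n + j)) else 0)"

definition fobj :: "nat \<Rightarrow> nat \<Rightarrow> (nat \<Rightarrow> nat \<Rightarrow> complex) \<Rightarrow> (nat \<Rightarrow> complex) \<Rightarrow> (nat \<Rightarrow> real) \<Rightarrow> real" where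
  "fobj n m a xn w = (\<Sum>i<m. ((cmod (cinner n (a i) (unplus n w)))\<^sup>2 - (cmod (cinner n (a i) xn))\<^sup>2)\<^sup>2)"

definition critical_point :: "nat \<Rightarrow> ((nat \<Rightarrow> real) \<Rightarrow> real) \<Rightarrow> (nat \<Rightarrow> real) \<Rightarrow> bool" where
  "critical_point d F w \<longleftrightarrow>
     (\<forall>k<d. ((\<lambda>t. F (w(k := w k + t))) has_real_derivative 0) (at 0))"

definition global_minimizer :: "((nat \<Rightarrow> real) \<Rightarrow> real) \<Rightarrow> (nat \<Rightarrow> real) \<Rightarrow> bool" where
  "global_minimizer F w \<longleftrightarrow> (\<forall>w'. F w \<le> F w')"

definition Gmin :: "nat \<Rightarrow> nat \<Rightarrow> (nat \<Rightarrow> nat \<Rightarrow> complex) \<Rightarrow> (nat \<Rightarrow> complex) \<Rightarrow> (nat \<Rightarrow> complex) set" where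
  "Gmin n m a xn = {z. global_minimizer (fobj n m a xn) (plusv n z)}"

definition distG :: "nat \<Rightarrow> nat \<Rightarrow> (nat \<Rightarrow> nat \<Rightarrow> complex) \<Rightarrow> (nat \<Rightarrow> complex) \<Rightarrow> (nat \<Rightarrow> complex) \<Rightarrow> real" where
  "distG n m a xn x = Inf ((\<lambda>g. cnorm n (\<lambda>j. x j - g j)) ` Gmin n m a xn)"

definition tensT :: "nat \<Rightarrow> nat \<Rightarrow> (nat \<Rightarrow> nat \<Rightarrow> complex) \<Rightarrow> real \<Rightarrow> nat \<Rightarrow> nat \<Rightarrow> nat \<Rightarrow> nat \<Rightarrow> real" where
  "tensT n m a \<sigma> i1 i2 i3 i4 =
     (1 / (real m * \<sigma> ^ 4)) * (\<Sum>i<m. plusv n (a i) i1 * plusv n (a i) i2 * plusv n (a i) i3 * plusv n (a i) i4)"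

definition tensS :: "nat \<Rightarrow> nat \<Rightarrow> nat \<Rightarrow> nat \<Rightarrow> real" where
  "tensS i1 i2 i3 i4 =
     (if i1 = i2 \<and> i3 = i4 then 1 else 0) + (if i1 = i3 \<and> i2 = i4 then 1 else 0)
     + (if i1 = i4 \<and> i2 = i3 then 1 else 0)"

definition tens_opnorm :: "nat \<Rightarrow> (nat \<Rightarrow> nat \<Rightarrow> nat \<Rightarrow> nat \<Rightarrow> real) \<Rightarrow> real" where
  "tens_opnorm d R = Sup {(\<Sum>i1<d. \<Sum>i2<d. \<Sum>i3<d. \<Sum>i4<d. R i1 i2 i3 i4 * u1 i1 * u2 i2 * u3 i3 * u4 i4)
      | u1 u2 u3 u4. rnorm d u1 * rnorm d u2 * rnorm d u3 * rnorm d u4 = 1}"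

end

theory Submission
  imports Defs
begin

definition tval :: "nat \<Rightarrow> (nat \<Rightarrow> nat \<Rightarrow> nat \<Rightarrow> nat \<Rightarrow> real) \<Rightarrow> (nat \<Rightarrow> real) \<Rightarrow> (nat \<Rightarrow> real) \<Rightarrow> (nat \<Rightarrow> real) \<Rightarrow> (nat \<Rightarrow> real) \<Rightarrow> real" where
  "tval d R u1 u2 u3 u4 = (\<Sum>i1<d. \<Sum>i2<d. \<Sum>i3<d. \<Sum>i4<d. R i1 i2 i3 i4 * u1 i1 * u2 i2 * u3 i3 * u4 i4)"

lemma coord_le_rnorm: "k < d \<Longrightarrow> \<bar>u k\<bar> \<le> rnorm d u"
proof -
  assume "k < d"
  then have "(u k)\<^sup>2 \<le> (\<Sum>k<d. (u k)\<^sup>2)" by (intro member_le_sum) auto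
  then show ?thesis unfolding rnorm_def using real_sqrt_le_mono by fastforce
qed

lemma rnorm_nonneg: "rnorm d u \<ge> 0" unfolding rnorm_def by (simp add: sum_nonneg)

lemma rnorm_scale: "rnorm d (\<lambda>k. c * u k) = \<bar>c\<bar> * rnorm d u"
  unfolding rnorm_def by (simp add: power_mult_distrib sum_distrib_left[symmetric] real_sqrt_mult)

lemma rnorm_zero: "rnorm d u = 0 \<Longrightarrow> k < d \<Longrightarrow> u k = 0"
  using coord_le_rnorm[of k d u] by simp

lemma tval_bound: "\<bar>tval d R u1 u2 u3 u4\<bar> \<le> (\<Sum>i1<d. \<Sum>i2<d. \<Sum>i3<d. \<Sum>i4<d. \<bar>R i1 i2 i3 i4\<bar>) * (rnorm d u1 * rnorm d u2 * rnorm d u3 * rnorm d u4)"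
proof -
  let ?P = "rnorm d u1 * rnorm d u2 * rnorm d u3 * rnorm d u4"
  have "\<bar>tval d R u1 u2 u3 u4\<bar> \<le> (\<Sum>i1<d. \<Sum>i2<d. \<Sum>i3<d. \<Sum>i4<d. \<bar>R i1 i2 i3 i4 * u1 i1 * u2 i2 * u3 i3 * u4 i4\<bar>)"
    unfolding tval_def
    by (rule order_trans[OF sum_abs] sum_mono)+ (rule order_refl)
  also have "\<dots> \<le> (\<Sum>i1<d. \<Sum>i2<d. \<Sum>i3<d. \<Sum>i4<d. \<bar>R i1 i2 i3 i4\<bar> * ?P)"
  proof (intro sum_mono)
    fix i1 i2 i3 i4 assume "i1 \<in> {..<d}" "i2 \<in> {..<d}" "i3 \<in> {..<d}" "i4 \<in> {..<d}"
    then have "\<bar>u1 i1\<bar> \<le> rnorm d u1" "\<bar>u2 i2\<bar> \<le> rnorm d u2" "\<bar>u3 i3\<bar> \<le> rnorm d u3" "\<bar>u4 i4\<bar> \<le> rnorm d u4"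
      by (auto intro: coord_le_rnorm)
    then show "\<bar>R i1 i2 i3 i4 * u1 i1 * u2 i2 * u3 i3 * u4 i4\<bar> \<le> \<bar>R i1 i2 i3 i4\<bar> * ?P"
      unfolding abs_mult mult.assoc
      by (intro mult_left_mono mult_mono) (auto simp: rnorm_nonneg mult_nonneg_nonneg)
  qed
  also have "\<dots> = (\<Sum>i1<d. \<Sum>i2<d. \<Sum>i3<d. \<Sum>i4<d. \<bar>R i1 i2 i3 i4\<bar>) * ?P"
    by (simp add: sum_distrib_right)
  finally show ?thesis .
qed

lemma tval_scale: "tval d R (\<lambda>k. c1 * u1 k) (\<lambda>k. c2 * u2 k) (\<lambda>k. c3 * u3 k) (\<lambda>k. c4 * u4 k) = c1*c2*c3*c4 * tval d R u1 u2 u3 u4"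
  unfolding tval_def by (simp add: sum_distrib_left algebra_simps)

lemma tval_le_opnorm:
  assumes d: "d > 0"
  shows "tval d R u1 u2 u3 u4 \<le> tens_opnorm d R * (rnorm d u1 * rnorm d u2 * rnorm d u3 * rnorm d u4)"
proof (cases "rnorm d u1 = 0 \<or> rnorm d u2 = 0 \<or> rnorm d u3 = 0 \<or> rnorm d u4 = 0")
  case True
  then have "tval d R u1 u2 u3 u4 = 0" unfolding tval_def
    by (auto dest: rnorm_zero intro!: sum.neutral)
  with True show ?thesis by auto
next
  case False
  define r1 where "r1 = rnorm d u1"
  define r2 where "r2 = rnorm d u2"
  define r3 where "r3 = rnorm d u3"
  define r4 where "r4 = rnorm d u4"
  have pos: "r1 > 0" "r2 > 0" "r3 > 0" "r4 > 0" using False rnorm_nonneg[of d]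
    unfolding r1_def r2_def r3_def r4_def by (auto simp: less_le)
  let ?v1 = "\<lambda>k. (1/r1) * u1 k" let ?v2 = "\<lambda>k. (1/r2) * u2 k"
  let ?v3 = "\<lambda>k. (1/r3) * u3 k" let ?v4 = "\<lambda>k. (1/r4) * u4 k"
  have n1: "rnorm d ?v1 * rnorm d ?v2 * rnorm d ?v3 * rnorm d ?v4 = 1"
    using pos unfolding rnorm_scale r1_def r2_def r3_def r4_def by simp
  let ?S = "{(\<Sum>i1<d. \<Sum>i2<d. \<Sum>i3<d. \<Sum>i4<d. R i1 i2 i3 i4 * u1 i1 * u2 i2 * u3 i3 * u4 i4)
      | u1 u2 u3 u4. rnorm d u1 * rnorm d u2 * rnorm d u3 * rnorm d u4 = 1}"
  have bdd: "bdd_above ?S"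
  proof (rule bdd_aboveI)
    fix y assume "y \<in> ?S"
    then obtain w1 w2 w3 w4 where "y = tval d R w1 w2 w3 w4" and "rnorm d w1 * rnorm d w2 * rnorm d w3 * rnorm d w4 = 1"
      unfolding tval_def by blast
    then show "y \<le> (\<Sum>i1<d. \<Sum>i2<d. \<Sum>i3<d. \<Sum>i4<d. \<bar>R i1 i2 i3 i4\<bar>)"
      using tval_bound[of d R w1 w2 w3 w4] by simp
  qed
  have "tval d R ?v1 ?v2 ?v3 ?v4 \<in> ?S" unfolding tval_def
    by (intro CollectI exI[of _ ?v1] exI[of _ ?v2] exI[of _ ?v3] exI[of _ ?v4] conjI[OF refl n1])
  then have "tval d R ?v1 ?v2 ?v3 ?v4 \<le> tens_opnorm d R"
    unfolding tens_opnorm_def using bdd by (rule cSup_upper)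
  then have "(1/r1)*(1/r2)*(1/r3)*(1/r4) * tval d R u1 u2 u3 u4 \<le> tens_opnorm d R"
    by (simp only: tval_scale)
  then have "tval d R u1 u2 u3 u4 \<le> tens_opnorm d R * (r1*r2*r3*r4)"
    using pos by (simp add: field_simps)
  then show ?thesis unfolding r1_def r2_def r3_def r4_def .
qed

lemma tval_abs_le_opnorm:
  assumes d: "d > 0"
  shows "\<bar>tval d R u1 u2 u3 u4\<bar> \<le> tens_opnorm d R * (rnorm d u1 * rnorm d u2 * rnorm d u3 * rnorm d u4)"
proof -
  have "tval d R (\<lambda>k. (-1) * u1 k) u2 u3 u4 \<le> tens_opnorm d R * (rnorm d (\<lambda>k. (-1) * u1 k) * rnorm d u2 * rnorm d u3 * rnorm d u4)"
    by (rule tval_le_opnorm[OF d])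
  moreover have "tval d R (\<lambda>k. (-1) * u1 k) u2 u3 u4 = - tval d R u1 u2 u3 u4"
    using tval_scale[of d R "-1" u1 1 u2 1 u3 1 u4] by simp
  moreover have "rnorm d (\<lambda>k. (-1) * u1 k) = rnorm d u1" using rnorm_scale[of d "-1" u1] by simp
  ultimately show ?thesis using tval_le_opnorm[OF d, of R u1 u2 u3 u4] by (simp only: abs_le_iff)
qed


definition dot :: "nat \<Rightarrow> (nat \<Rightarrow> real) \<Rightarrow> (nat \<Rightarrow> real) \<Rightarrow> real" where
  "dot d u v = (\<Sum>k<d. u k * v k)"

lemma tval_diff: "tval d (\<lambda>i1 i2 i3 i4. A i1 i2 i3 i4 - B i1 i2 i3 i4) u1 u2 u3 u4 = tval d A u1 u2 u3 u4 - tval d B u1 u2 u3 u4"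
  unfolding tval_def by (simp add: sum_subtractf[symmetric] algebra_simps)

lemma tval_add: "tval d (\<lambda>i1 i2 i3 i4. A i1 i2 i3 i4 + B i1 i2 i3 i4) u1 u2 u3 u4 = tval d A u1 u2 u3 u4 + tval d B u1 u2 u3 u4"
  unfolding tval_def by (simp add: sum.distrib[symmetric] algebra_simps)

lemma swap4: "(\<Sum>i\<in>I. \<Sum>i1\<in>A. \<Sum>i2\<in>A. \<Sum>i3\<in>A. \<Sum>i4\<in>A. G i i1 i2 i3 i4) = (\<Sum>i1\<in>A. \<Sum>i2\<in>A. \<Sum>i3\<in>A. \<Sum>i4\<in>A. \<Sum>i\<in>I. G i i1 i2 i3 i4)"
proof -
  have "(\<Sum>i\<in>I. \<Sum>i1\<in>A. \<Sum>i2\<in>A. \<Sum>i3\<in>A. \<Sum>i4\<in>A. G i i1 i2 i3 i4) = (\<Sum>i1\<in>A. \<Sum>i\<in>I. \<Sum>i2\<in>A. \<Sum>i3\<in>A. \<Sum>i4\<in>A. G i i1 i2 i3 i4)"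
    by (rule sum.swap)
  also have "\<dots> = (\<Sum>i1\<in>A. \<Sum>i2\<in>A. \<Sum>i\<in>I. \<Sum>i3\<in>A. \<Sum>i4\<in>A. G i i1 i2 i3 i4)"
    by (rule sum.cong[OF refl], rule sum.swap)
  also have "\<dots> = (\<Sum>i1\<in>A. \<Sum>i2\<in>A. \<Sum>i3\<in>A. \<Sum>i\<in>I. \<Sum>i4\<in>A. G i i1 i2 i3 i4)"
    by (rule sum.cong[OF refl], rule sum.cong[OF refl], rule sum.swap)
  also have "\<dots> = (\<Sum>i1\<in>A. \<Sum>i2\<in>A. \<Sum>i3\<in>A. \<Sum>i4\<in>A. \<Sum>i\<in>I. G i i1 i2 i3 i4)"
    by (rule sum.cong[OF refl], rule sum.cong[OF refl], rule sum.cong[OF refl], rule sum.swap)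
  finally show ?thesis .
qed

lemma rev4: "(\<Sum>a\<in>A. \<Sum>b\<in>A. \<Sum>c\<in>A. \<Sum>d\<in>A. F a b c d) = (\<Sum>d\<in>A. \<Sum>c\<in>A. \<Sum>b\<in>A. \<Sum>a\<in>A. F a b c d)"
proof -
  have "(\<Sum>a\<in>A. \<Sum>b\<in>A. \<Sum>c\<in>A. \<Sum>d\<in>A. F a b c d) = (\<Sum>b\<in>A. \<Sum>a\<in>A. \<Sum>c\<in>A. \<Sum>d\<in>A. F a b c d)"
    by (rule sum.swap)
  also have "\<dots> = (\<Sum>b\<in>A. \<Sum>c\<in>A. \<Sum>a\<in>A. \<Sum>d\<in>A. F a b c d)"
    by (rule sum.cong[OF refl], rule sum.swap)
  also have "\<dots> = (\<Sum>b\<in>A. \<Sum>c\<in>A. \<Sum>d\<in>A. \<Sum>a\<in>A. F a b c d)"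
    by (rule sum.cong[OF refl], rule sum.cong[OF refl], rule sum.swap)
  also have "\<dots> = (\<Sum>c\<in>A. \<Sum>b\<in>A. \<Sum>d\<in>A. \<Sum>a\<in>A. F a b c d)"
    by (rule sum.swap)
  also have "\<dots> = (\<Sum>c\<in>A. \<Sum>d\<in>A. \<Sum>b\<in>A. \<Sum>a\<in>A. F a b c d)"
    by (rule sum.cong[OF refl], rule sum.swap)
  also have "\<dots> = (\<Sum>d\<in>A. \<Sum>c\<in>A. \<Sum>b\<in>A. \<Sum>a\<in>A. F a b c d)"
    by (rule sum.swap)
  finally show ?thesis .
qed

lemma tval_T: "tval d (tensT n m a \<sigma>) u1 u2 u3 u4 = (1 / (real m * \<sigma> ^ 4)) *
   (\<Sum>i<m. dot d (plusv n (a i)) u1 * dot d (plusv n (a i)) u2 * dot d (plusv n (a i)) u3 * dot d (plusv n (a i)) u4)"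
proof -
  let ?P = "\<lambda>i. plusv n (a i)"
  have "(\<Sum>i<m. dot d (?P i) u1 * dot d (?P i) u2 * dot d (?P i) u3 * dot d (?P i) u4)
     = (\<Sum>i<m. \<Sum>i4<d. \<Sum>i3<d. \<Sum>i2<d. \<Sum>i1<d. ?P i i1 * u1 i1 * (?P i i2 * u2 i2) * (?P i i3 * u3 i3) * (?P i i4 * u4 i4))"
    unfolding dot_def by (simp only: sum_distrib_left sum_distrib_right)
  also have "\<dots> = (\<Sum>i4<d. \<Sum>i3<d. \<Sum>i2<d. \<Sum>i1<d. \<Sum>i<m. ?P i i1 * u1 i1 * (?P i i2 * u2 i2) * (?P i i3 * u3 i3) * (?P i i4 * u4 i4))"
    by (rule swap4)
  also have "\<dots> = (\<Sum>i1<d. \<Sum>i2<d. \<Sum>i3<d. \<Sum>i4<d. \<Sum>i<m. ?P i i1 * u1 i1 * (?P i i2 * u2 i2) * (?P i i3 * u3 i3) * (?P i i4 * u4 i4))"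
    by (rule rev4)
  finally show ?thesis
    unfolding tval_def tensT_def
    by (simp add: sum_distrib_left sum_distrib_right mult_ac)
qed

lemma ifmult: "(if P then 1 else 0) * (x::real) = (if P then x else 0)" by simp
lemma ifmult2: "(if P then x else 0) * (y::real) = (if P then x * y else 0)" by simp

lemma S1: "tval d (\<lambda>i1 i2 i3 i4. if i1 = i2 \<and> i3 = i4 then 1 else 0) u1 u2 u3 u4 = dot d u1 u2 * dot d u3 u4"
proof -
  have "tval d (\<lambda>i1 i2 i3 i4. if i1 = i2 \<and> i3 = i4 then 1 else 0) u1 u2 u3 u4
     = (\<Sum>i1<d. \<Sum>i2<d. if i1 = i2 then u1 i1 * u2 i2 * (\<Sum>i3<d. \<Sum>i4<d. if i3 = i4 then u3 i3 * u4 i4 else 0) else 0)"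
    unfolding tval_def by (intro sum.cong refl) (auto simp: sum_distrib_left mult.assoc ifmult ifmult2 sum.delta sum.delta' intro!: sum.cong)
  also have "\<dots> = dot d u1 u2 * dot d u3 u4"
    unfolding dot_def by (simp add: sum.delta sum_distrib_right)
  finally show ?thesis .
qed


lemma dd: "i < (d::nat) \<Longrightarrow> j < d \<Longrightarrow> (\<Sum>k<d. \<Sum>l<d. (if i = k \<and> j = l then 1 else 0) * (F k l::real)) = F i j"
proof -
  assume "i < d" "j < d"
  have "(\<Sum>k<d. \<Sum>l<d. (if i = k \<and> j = l then 1 else 0) * F k l) = (\<Sum>k<d. if i = k then F k j else 0)"
  proof (intro sum.cong refl)
    fix k show "(\<Sum>l<d. (if i = k \<and> j = l then 1 else 0) * F k l) = (if i = k then F k j else 0)"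
      using \<open>j < d\<close> apply (cases "i = k") by (simp_all add: ifmult)
  qed
  then show ?thesis using \<open>i < d\<close> by (simp add: sum.delta)
qed

lemma dd': "i < (d::nat) \<Longrightarrow> j < d \<Longrightarrow> (\<Sum>k<d. \<Sum>l<d. (if i = l \<and> j = k then 1 else 0) * (F k l::real)) = F j i"
proof -
  assume "i < d" "j < d"
  have "(\<Sum>k<d. \<Sum>l<d. (if i = l \<and> j = k then 1 else 0) * F k l) = (\<Sum>k<d. if j = k then F k i else 0)"
  proof (intro sum.cong refl)
    fix k show "(\<Sum>l<d. (if i = l \<and> j = k then 1 else 0) * F k l) = (if j = k then F k i else 0)"
      using \<open>i < d\<close> apply (cases "j = k") by (simp_all add: ifmult)
  qed
  then show ?thesis using \<open>j < d\<close> by (simp add: sum.delta)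
qed

lemma S2: "tval d (\<lambda>i1 i2 i3 i4. if i1 = i3 \<and> i2 = i4 then 1 else 0) u1 u2 u3 u4 = dot d u1 u3 * dot d u2 u4"
proof -
  have "tval d (\<lambda>i1 i2 i3 i4. if i1 = i3 \<and> i2 = i4 then 1 else 0) u1 u2 u3 u4
     = (\<Sum>i1<d. \<Sum>i2<d. u1 i1 * (u2 i2 * (u3 i1 * u4 i2)))"
    unfolding tval_def mult.assoc
    by (intro sum.cong refl) (simp add: dd[where F="\<lambda>k l. u1 _ * (u2 _ * (u3 k * u4 l))"])
  also have "\<dots> = dot d u1 u3 * dot d u2 u4"
    unfolding dot_def sum_product by (simp add: mult_ac)
  finally show ?thesis .
qed

lemma S3: "tval d (\<lambda>i1 i2 i3 i4. if i1 = i4 \<and> i2 = i3 then 1 else 0) u1 u2 u3 u4 = dot d u1 u4 * dot d u2 u3"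
proof -
  have "tval d (\<lambda>i1 i2 i3 i4. if i1 = i4 \<and> i2 = i3 then 1 else 0) u1 u2 u3 u4
     = (\<Sum>i1<d. \<Sum>i2<d. u1 i1 * (u2 i2 * (u3 i2 * u4 i1)))"
    unfolding tval_def mult.assoc
    by (intro sum.cong refl) (simp add: dd'[where F="\<lambda>k l. u1 _ * (u2 _ * (u3 k * u4 l))"])
  also have "\<dots> = dot d u1 u4 * dot d u2 u3"
    unfolding dot_def sum_product by (simp add: mult_ac)
  finally show ?thesis .
qed


lemma sum_2n: "(\<Sum>k<2*(n::nat). F k) = (\<Sum>j<n. F j) + (\<Sum>j<n. F (n+j))"
proof -
  have e: "{..<2*n} = {..<n} \<union> {n..<n+n}" by auto
  have "(\<Sum>k<2*n. F k) = sum F ({..<n} \<union> {n..<n+n})" by (simp only: e)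
  also have "\<dots> = (\<Sum>j<n. F j) + (\<Sum>k\<in>{n..<n+n}. F k)"
    by (rule sum.union_disjoint) auto
  finally have "(\<Sum>k<2*n. F k) = (\<Sum>j<n. F j) + (\<Sum>k\<in>{n..<n+n}. F k)" .
  also have "(\<Sum>k\<in>{n..<n+n}. F k) = (\<Sum>j<n. F (n+j))"
    using sum.shift_bounds_nat_ivl[of F 0 n n] by (simp add: lessThan_atLeast0 add.commute)
  finally show ?thesis .
qed

lemma cinner_plus: "dot (2*n) (plusv n u) (plusv n v) = Re (cinner n u v)"
  unfolding dot_def cinner_def sum_2n plusv_def
  by (simp add: Re_sum sum.distrib[symmetric])

lemma cinner_lin: "cinner n (a::nat\<Rightarrow>complex) v = Complex (dot (2*n) (plusv n a) (plusv n v)) (dot (2*n) (plusv n a) (plusv n (\<lambda>j. \<i> * v j)))"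
  unfolding dot_def cinner_def sum_2n plusv_def
  by (simp add: complex_eq_iff Re_sum Im_sum sum.distrib[symmetric] algebra_simps)

lemma rnorm_plus: "rnorm (2*n) (plusv n v) = cnorm n v"
  unfolding rnorm_def cnorm_def sum_2n plusv_def
  by (simp add: sum.distrib[symmetric] cmod_power2)

lemma unplus_plusv: "j < n \<Longrightarrow> unplus n (plusv n v) j = v j"
  by (simp add: unplus_def plusv_def complex_eq_iff)

lemma cinner_cong: "(\<And>j. j < n \<Longrightarrow> u j = v j) \<Longrightarrow> cinner n a u = cinner n a v"
  unfolding cinner_def by simp

lemma fobj_alt: "fobj n m a xn (plusv n x) = (\<Sum>i<m. ((cmod (cinner n (a i) x))\<^sup>2 - (cmod (cinner n (a i) xn))\<^sup>2)\<^sup>2)"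
  unfolding fobj_def by (simp add: cinner_cong[OF unplus_plusv])


definition T4 :: "nat \<Rightarrow> nat \<Rightarrow> (nat \<Rightarrow> nat \<Rightarrow> complex) \<Rightarrow> (nat \<Rightarrow> real) \<Rightarrow> (nat \<Rightarrow> real) \<Rightarrow> (nat \<Rightarrow> real) \<Rightarrow> (nat \<Rightarrow> real) \<Rightarrow> real" where
  "T4 n m a u1 u2 u3 u4 = (\<Sum>i<m. dot (2*n) (plusv n (a i)) u1 * dot (2*n) (plusv n (a i)) u2 * dot (2*n) (plusv n (a i)) u3 * dot (2*n) (plusv n (a i)) u4)"

definition S4 :: "nat \<Rightarrow> (nat \<Rightarrow> real) \<Rightarrow> (nat \<Rightarrow> real) \<Rightarrow> (nat \<Rightarrow> real) \<Rightarrow> (nat \<Rightarrow> real) \<Rightarrow> real" where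
  "S4 d u1 u2 u3 u4 = dot d u1 u2 * dot d u3 u4 + dot d u1 u3 * dot d u2 u4 + dot d u1 u4 * dot d u2 u3"

lemma tensS_split: "tensS = (\<lambda>i1 i2 i3 i4. ((if i1 = i2 \<and> i3 = i4 then 1 else 0) + (if i1 = i3 \<and> i2 = i4 then 1 else 0)) + (if i1 = i4 \<and> i2 = i3 then 1 else 0))"
  unfolding tensS_def by (intro ext) simp

lemma tval_S: "tval d tensS u1 u2 u3 u4 = S4 d u1 u2 u3 u4"
  unfolding tensS_split tval_add S1 S2 S3 S4_def ..

lemma hyp_bound:
  assumes n: "n \<ge> 1" and m: "m \<ge> 1" and s: "\<sigma> > 0"
    and op: "tens_opnorm (2*n) (\<lambda>i1 i2 i3 i4. tensT n m a \<sigma> i1 i2 i3 i4 - tensS i1 i2 i3 i4) < \<delta>0"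
  shows "\<bar>T4 n m a u1 u2 u3 u4 - (real m * \<sigma>^4) * S4 (2*n) u1 u2 u3 u4\<bar>
     \<le> (real m * \<sigma>^4) * \<delta>0 * (rnorm (2*n) u1 * rnorm (2*n) u2 * rnorm (2*n) u3 * rnorm (2*n) u4)"
proof -
  define c where "c = real m * \<sigma>^4"
  have c: "c > 0" using m s unfolding c_def by simp
  let ?P = "rnorm (2*n) u1 * rnorm (2*n) u2 * rnorm (2*n) u3 * rnorm (2*n) u4"
  have P: "?P \<ge> 0" by (simp add: rnorm_nonneg)
  have "tval (2*n) (\<lambda>i1 i2 i3 i4. tensT n m a \<sigma> i1 i2 i3 i4 - tensS i1 i2 i3 i4) u1 u2 u3 u4
      = (1/c) * T4 n m a u1 u2 u3 u4 - S4 (2*n) u1 u2 u3 u4"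
    unfolding tval_diff tval_T tval_S T4_def c_def ..
  also have "\<dots> = (1/c) * (T4 n m a u1 u2 u3 u4 - c * S4 (2*n) u1 u2 u3 u4)"
    using c by (simp add: field_simps)
  finally have eq: "tval (2*n) (\<lambda>i1 i2 i3 i4. tensT n m a \<sigma> i1 i2 i3 i4 - tensS i1 i2 i3 i4) u1 u2 u3 u4 = (1/c) * (T4 n m a u1 u2 u3 u4 - c * S4 (2*n) u1 u2 u3 u4)" .
  have "\<bar>(1/c) * (T4 n m a u1 u2 u3 u4 - c * S4 (2*n) u1 u2 u3 u4)\<bar> \<le> tens_opnorm (2*n) (\<lambda>i1 i2 i3 i4. tensT n m a \<sigma> i1 i2 i3 i4 - tensS i1 i2 i3 i4) * ?P"
    unfolding eq[symmetric] using n by (intro tval_abs_le_opnorm) simp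
  also have "\<dots> \<le> \<delta>0 * ?P" using op P by (intro mult_right_mono) auto
  finally have "\<bar>(1/c) * (T4 n m a u1 u2 u3 u4 - c * S4 (2*n) u1 u2 u3 u4)\<bar> \<le> \<delta>0 * ?P" .
  then have "(1/c) * \<bar>T4 n m a u1 u2 u3 u4 - c * S4 (2*n) u1 u2 u3 u4\<bar> \<le> \<delta>0 * ?P"
    using c by (simp add: abs_mult)
  then show ?thesis using c unfolding c_def[symmetric] by (simp add: field_simps)
qed


definition ivec :: "(nat \<Rightarrow> complex) \<Rightarrow> (nat \<Rightarrow> complex)" where
  "ivec v = (\<lambda>j. \<i> * v j)"

lemma re_ii: "Re (cinner n (ivec u) (ivec v)) = Re (cinner n u v)"
  unfolding cinner_def ivec_def by (simp add: Re_sum)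

lemma re_i2: "Re (cinner n u (ivec v)) = Im (cinner n u v)"
  unfolding cinner_def ivec_def by (simp add: Re_sum Im_sum)

lemma re_i1: "Re (cinner n (ivec u) v) = - Im (cinner n u v)"
  unfolding cinner_def ivec_def by (simp add: Re_sum Im_sum sum_subtractf)

lemma cinner_self_re: "Re (cinner n v v) = (cnorm n v)^2"
proof -
  have "(cnorm n v)^2 = (\<Sum>j<n. (cmod (v j))^2)" unfolding cnorm_def by (simp add: sum_nonneg)
  also have "\<dots> = Re (cinner n v v)" unfolding cinner_def Re_sum
    by (intro sum.cong refl) (subst cmod_power2, simp add: power2_eq_square)
  finally show ?thesis by simp
qed

lemma cinner_self_im: "Im (cinner n v v) = 0"
  unfolding cinner_def by (simp add: Im_sum algebra_simps)

lemma cinner_swap: "cinner n u v = cnj (cinner n v u)"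
  unfolding cinner_def by (simp add: mult.commute)

lemma cnorm_nonneg: "cnorm n v \<ge> 0" unfolding cnorm_def by (simp add: sum_nonneg)

lemma cnorm_ivec: "cnorm n (ivec v) = cnorm n v"
  unfolding cnorm_def ivec_def by (simp add: norm_mult)

lemma dotpl: "dot (2*n) (plusv n u) (plusv n v) = Re (cinner n u v)"
  by (rule cinner_plus)

lemma ell: "cinner n a v = Complex (dot (2*n) (plusv n a) (plusv n v)) (dot (2*n) (plusv n a) (plusv n (ivec v)))"
  unfolding ivec_def by (rule cinner_lin)


lemma cmod4: "(cmod (Complex p q))^4 = (p^2 + q^2)^2"
proof -
  have "(cmod (Complex p q))^4 = ((cmod (Complex p q))^2)^2" by simp
  also have "(cmod (Complex p q))^2 = p^2 + q^2" by (simp add: cmod_def)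
  finally show ?thesis .
qed

lemma dot_comm: "dot d u v = dot d v u" unfolding dot_def by (simp add: mult.commute)

lemma C1:
  assumes HB: "\<And>u1 u2 u3 u4. \<bar>T4 n m a u1 u2 u3 u4 - c * S4 (2*n) u1 u2 u3 u4\<bar>
     \<le> c * \<delta>0 * (rnorm (2*n) u1 * rnorm (2*n) u2 * rnorm (2*n) u3 * rnorm (2*n) u4)"
  shows "\<bar>(\<Sum>i<m. (cmod (cinner n (a i) v))^4) - 8 * c * (cnorm n v)^4\<bar> \<le> 4 * c * \<delta>0 * (cnorm n v)^4"
proof -
  define V where "V = plusv n v"
  define W where "W = plusv n (ivec v)"
  define N where "N = cnorm n v"
  have sum: "(\<Sum>i<m. (cmod (cinner n (a i) v))^4) = T4 n m a V V V V + 2 * T4 n m a V V W W + T4 n m a W W W W"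
    unfolding ell cmod4 T4_def V_def W_def
    by (simp add: sum.distrib sum_distrib_left power2_eq_square algebra_simps)
  have dVV: "dot (2*n) V V = N^2" unfolding V_def N_def dotpl cinner_self_re ..
  have dWW: "dot (2*n) W W = N^2" unfolding W_def N_def dotpl re_ii cinner_self_re cnorm_ivec ..
  have dVW: "dot (2*n) V W = 0" unfolding V_def W_def dotpl re_i2 cinner_self_im ..
  have dWV: "dot (2*n) W V = 0" using dVW dot_comm by metis
  have rV: "rnorm (2*n) V = N" unfolding V_def N_def rnorm_plus ..
  have rW: "rnorm (2*n) W = N" unfolding W_def N_def rnorm_plus cnorm_ivec ..
  have S1: "S4 (2*n) V V V V = 3 * N^4" unfolding S4_def dVV by (simp add: power2_eq_square power4_eq_xxxx)
  have S2: "S4 (2*n) V V W W = N^4" unfolding S4_def dVV dWW dVW dWV by (simp add: power2_eq_square power4_eq_xxxx)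
  have S3: "S4 (2*n) W W W W = 3 * N^4" unfolding S4_def dWW by (simp add: power2_eq_square power4_eq_xxxx)
  have h1: "\<bar>T4 n m a V V V V - c * (3 * N^4)\<bar> \<le> c * \<delta>0 * N^4"
    using HB[of V V V V] unfolding S1 rV by (simp add: power4_eq_xxxx)
  have h2: "\<bar>T4 n m a V V W W - c * N^4\<bar> \<le> c * \<delta>0 * N^4"
    using HB[of V V W W] unfolding S2 rV rW by (simp add: power4_eq_xxxx)
  have h3: "\<bar>T4 n m a W W W W - c * (3 * N^4)\<bar> \<le> c * \<delta>0 * N^4"
    using HB[of W W W W] unfolding S3 rW by (simp add: power4_eq_xxxx)
  show ?thesis unfolding sum N_def[symmetric] using h1 h2 h3 by (simp add: abs_le_iff)
qed

lemma C2:
  assumes HB: "\<And>u1 u2 u3 u4. \<bar>T4 n m a u1 u2 u3 u4 - c * S4 (2*n) u1 u2 u3 u4\<bar>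
     \<le> c * \<delta>0 * (rnorm (2*n) u1 * rnorm (2*n) u2 * rnorm (2*n) u3 * rnorm (2*n) u4)"
    and c: "c > 0"
    and im: "Im (cinner n h g) = 0"
  shows "(\<Sum>i<m. (Re (cinner n (a i) g * cnj (cinner n (a i) h)))^2) \<ge> c * (2 - 4 * \<delta>0) * (cnorm n g)^2 * (cnorm n h)^2"
proof -
  define G where "G = plusv n g"
  define H where "H = plusv n h"
  define Gi where "Gi = plusv n (ivec g)"
  define Hi where "Hi = plusv n (ivec h)"
  define Ng where "Ng = cnorm n g"
  define Nh where "Nh = cnorm n h"
  define e where "e = dot (2*n) G H"
  have sum: "(\<Sum>i<m. (Re (cinner n (a i) g * cnj (cinner n (a i) h)))^2) = T4 n m a G H G H + 2 * T4 n m a G H Gi Hi + T4 n m a Gi Hi Gi Hi"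
    unfolding ell T4_def G_def H_def Gi_def Hi_def
    by (simp add: sum.distrib sum_distrib_left power2_eq_square algebra_simps)
  have dGG: "dot (2*n) G G = Ng^2" unfolding G_def Ng_def dotpl cinner_self_re ..
  have dHH: "dot (2*n) H H = Nh^2" unfolding H_def Nh_def dotpl cinner_self_re ..
  have dGiGi: "dot (2*n) Gi Gi = Ng^2" unfolding Gi_def Ng_def dotpl re_ii cinner_self_re cnorm_ivec ..
  have dHiHi: "dot (2*n) Hi Hi = Nh^2" unfolding Hi_def Nh_def dotpl re_ii cinner_self_re cnorm_ivec ..
  have dHG: "dot (2*n) H G = e" unfolding e_def using dot_comm by metis
  have dGiHi: "dot (2*n) Gi Hi = e" unfolding e_def Gi_def Hi_def G_def H_def dotpl re_ii ..
  have dHiGi: "dot (2*n) Hi Gi = e" using dGiHi dot_comm by metis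
  have dGGi: "dot (2*n) G Gi = 0" unfolding G_def Gi_def dotpl re_i2 cinner_self_im ..
  have dHHi: "dot (2*n) H Hi = 0" unfolding H_def Hi_def dotpl re_i2 cinner_self_im ..
  have dGHi: "dot (2*n) G Hi = 0" unfolding G_def Hi_def dotpl re_i2
    using im by (subst cinner_swap) simp
  have dHGi: "dot (2*n) H Gi = 0" unfolding H_def Gi_def dotpl re_i2 using im .
  have rG: "rnorm (2*n) G = Ng" unfolding G_def Ng_def rnorm_plus ..
  have rH: "rnorm (2*n) H = Nh" unfolding H_def Nh_def rnorm_plus ..
  have rGi: "rnorm (2*n) Gi = Ng" unfolding Gi_def Ng_def rnorm_plus cnorm_ivec ..
  have rHi: "rnorm (2*n) Hi = Nh" unfolding Hi_def Nh_def rnorm_plus cnorm_ivec ..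
  have S1: "S4 (2*n) G H G H = 2 * e^2 + Ng^2 * Nh^2" unfolding S4_def dGG dHH dHG e_def[symmetric] by (simp add: power2_eq_square)
  have S2: "S4 (2*n) G H Gi Hi = e^2" unfolding S4_def dGGi dHHi dGHi dHGi dGiHi e_def[symmetric] by (simp add: power2_eq_square)
  have S3: "S4 (2*n) Gi Hi Gi Hi = 2 * e^2 + Ng^2 * Nh^2" unfolding S4_def dGiGi dHiHi dHiGi dGiHi by (simp add: power2_eq_square)
  have h1: "\<bar>T4 n m a G H G H - c * (2 * e^2 + Ng^2 * Nh^2)\<bar> \<le> c * \<delta>0 * (Ng^2 * Nh^2)"
    using HB[of G H G H] unfolding S1 rG rH by (simp add: power2_eq_square mult_ac)
  have h2: "\<bar>T4 n m a G H Gi Hi - c * e^2\<bar> \<le> c * \<delta>0 * (Ng^2 * Nh^2)"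
    using HB[of G H Gi Hi] unfolding S2 rG rH rGi rHi by (simp add: power2_eq_square mult_ac)
  have h3: "\<bar>T4 n m a Gi Hi Gi Hi - c * (2 * e^2 + Ng^2 * Nh^2)\<bar> \<le> c * \<delta>0 * (Ng^2 * Nh^2)"
    using HB[of Gi Hi Gi Hi] unfolding S3 rGi rHi by (simp add: power2_eq_square mult_ac)
  have ce: "c * e^2 \<ge> 0" using c by simp
  show ?thesis unfolding sum Ng_def[symmetric] Nh_def[symmetric] using h1 h2 h3 ce
    by (simp add: abs_le_iff algebra_simps)
qed


definition ek :: "nat \<Rightarrow> nat \<Rightarrow> real" where "ek k = (\<lambda>j. if j = k then 1 else 0)"

definition Dk :: "nat \<Rightarrow> nat \<Rightarrow> (nat \<Rightarrow> nat \<Rightarrow> complex) \<Rightarrow> (nat \<Rightarrow> complex) \<Rightarrow> (nat \<Rightarrow> real) \<Rightarrow> nat \<Rightarrow> real" where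
  "Dk n m a xn X k = (\<Sum>i<m. 2 * ((cmod (cinner n (a i) (unplus n X)))\<^sup>2 - (cmod (cinner n (a i) xn))\<^sup>2)
       * (2 * Re (cinner n (a i) (unplus n X) * cnj (cinner n (a i) (unplus n (ek k))))))"

lemma unplus_upd: "unplus n (X(k := X k + t)) = (\<lambda>j. unplus n X j + of_real t * unplus n (ek k) j)"
  unfolding unplus_def ek_def by (auto simp: complex_eq_iff)

lemma cinner_add_scale: "cinner n a (\<lambda>j. u j + of_real t * v j) = cinner n a u + of_real t * cinner n a v"
  unfolding cinner_def by (simp add: algebra_simps sum.distrib sum_distrib_left)

lemma term_deriv:
  "((\<lambda>t. ((cmod (A + of_real t * B))\<^sup>2 - y)\<^sup>2) has_real_derivative
     2 * ((cmod A)\<^sup>2 - y) * (2 * Re (A * cnj B))) (at 0)"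
proof -
  have eq: "(\<lambda>t. ((cmod (A + of_real t * B))\<^sup>2 - y)\<^sup>2) = (\<lambda>t. ((Re A + t * Re B)^2 + (Im A + t * Im B)^2 - y)^2)"
    by (simp add: cmod_power2)
  have "((\<lambda>t. ((Re A + t * Re B)^2 + (Im A + t * Im B)^2 - y)^2) has_real_derivative
     2 * ((Re A + 0 * Re B)^2 + (Im A + 0 * Im B)^2 - y) * (2 * (Re A + 0 * Re B) * Re B + 2 * (Im A + 0 * Im B) * Im B)) (at 0)"
    by (auto intro!: derivative_eq_intros simp: algebra_simps)
  then show ?thesis unfolding eq by (simp add: cmod_power2 algebra_simps)
qed

lemma fobj_deriv:
  "((\<lambda>t. fobj n m a xn (X(k := X k + t))) has_real_derivative Dk n m a xn X k) (at 0)"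
proof -
  have eq: "(\<lambda>t. fobj n m a xn (X(k := X k + t))) = (\<lambda>t. \<Sum>i<m. ((cmod (cinner n (a i) (unplus n X) + of_real t * cinner n (a i) (unplus n (ek k))))\<^sup>2 - (cmod (cinner n (a i) xn))\<^sup>2)\<^sup>2)"
    unfolding fobj_def unplus_upd cinner_add_scale ..
  show ?thesis unfolding eq Dk_def
    by (rule DERIV_sum) (rule term_deriv)
qed

lemma ifmult3: "(x::real) * (if P then 1 else 0) = (if P then x else 0)" by simp

lemma B_low: "k < n \<Longrightarrow> cinner n a (unplus n (ek k)) = a k"
  unfolding cinner_def unplus_def ek_def
  by (simp add: if_distrib[of cnj] cong: if_cong) (simp add: complex_eq_iff Re_sum Im_sum if_distrib[of Re] if_distrib[of Im] ifmult3 cong: if_cong)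


lemma B_high: "j < n \<Longrightarrow> cinner n a (unplus n (ek (n+j))) = - \<i> * a j"
  unfolding cinner_def unplus_def ek_def
  by (simp add: if_distrib[of cnj] cong: if_cong) (simp add: complex_eq_iff Re_sum Im_sum if_distrib[of Re] if_distrib[of Im] ifmult3 sum_negf cong: if_cong)

lemma sumB: "(\<Sum>k<2*n. of_real (H k) * cinner n a (unplus n (ek k))) = cinner n a (unplus n H)"
proof -
  have "(\<Sum>k<2*n. of_real (H k) * cinner n a (unplus n (ek k)))
     = (\<Sum>j<n. of_real (H j) * a j) + (\<Sum>j<n. of_real (H (n+j)) * (- \<i> * a j))"
    unfolding sum_2n by (simp add: B_low B_high)
  also have "\<dots> = cinner n a (unplus n H)"
    unfolding cinner_def unplus_def
    by (simp add: sum.distrib[symmetric] complex_eq_iff Re_sum Im_sum algebra_simps)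
  finally show ?thesis .
qed

lemma re_sum_lin: "Re (A * cnj (\<Sum>k\<in>K. of_real (H k) * B k)) = (\<Sum>k\<in>K. H k * Re (A * cnj (B k)))"
  by (simp add: cnj_sum sum_distrib_left Re_sum algebra_simps)

lemma swap_lin: "(\<Sum>k\<in>K. H k * (\<Sum>i\<in>I. 2 * r i * (2 * F i k))) = (\<Sum>i\<in>I. 4 * r i * (\<Sum>k\<in>K. H k * (F i k::real)))"
  by (simp add: sum_distrib_left sum.swap[of _ K] mult_ac)

lemma grad_identity:
  "(\<Sum>k<2*n. H k * Dk n m a xn X k) = (\<Sum>i<m. 4 * ((cmod (cinner n (a i) (unplus n X)))\<^sup>2 - (cmod (cinner n (a i) xn))\<^sup>2)
       * Re (cinner n (a i) (unplus n X) * cnj (cinner n (a i) (unplus n H))))"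
proof -
  have "(\<Sum>k<2*n. H k * Dk n m a xn X k) = (\<Sum>i<m. 4 * ((cmod (cinner n (a i) (unplus n X)))\<^sup>2 - (cmod (cinner n (a i) xn))\<^sup>2)
       * (\<Sum>k<2*n. H k * Re (cinner n (a i) (unplus n X) * cnj (cinner n (a i) (unplus n (ek k))))))"
    unfolding Dk_def by (rule swap_lin)
  also have "\<dots> = (\<Sum>i<m. 4 * ((cmod (cinner n (a i) (unplus n X)))\<^sup>2 - (cmod (cinner n (a i) xn))\<^sup>2)
       * Re (cinner n (a i) (unplus n X) * cnj (cinner n (a i) (unplus n H))))"
  proof (intro sum.cong refl arg_cong2[where f="(*)"])
    fix i
    show "(\<Sum>k<2*n. H k * Re (cinner n (a i) (unplus n X) * cnj (cinner n (a i) (unplus n (ek k)))))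
      = Re (cinner n (a i) (unplus n X) * cnj (cinner n (a i) (unplus n H)))"
      by (subst sumB[symmetric], subst re_sum_lin) (rule refl)
  qed
  finally show ?thesis .
qed


lemma cnorm_sq: "(cnorm n v)^2 = (\<Sum>j<n. (cmod (v j))\<^sup>2)"
  unfolding cnorm_def by (simp add: sum_nonneg)

lemma cmod_diff_sq: "(cmod (a - b))^2 = (cmod a)^2 + (cmod b)^2 - 2 * Re (a * cnj b)"
  by (simp only: cmod_power2) (simp add: power2_eq_square algebra_simps)

lemma cnorm_diff_sq: "(cnorm n (\<lambda>j. u j - v j))^2 = (cnorm n u)^2 + (cnorm n v)^2 - 2 * Re (cinner n u v)"
  unfolding cnorm_sq cinner_def cmod_diff_sq Re_sum
  by (simp add: sum.distrib sum_subtractf sum_distrib_left)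

lemma cinner_scale2: "cinner n a (\<lambda>j. z * v j) = cnj z * cinner n a v"
  unfolding cinner_def by (simp add: sum_distrib_left mult_ac)

lemma cnorm_scale: "cnorm n (\<lambda>j. z * v j) = cmod z * cnorm n v"
  unfolding cnorm_def by (simp add: norm_mult power_mult_distrib sum_distrib_left[symmetric] real_sqrt_mult)

lemma cnorm_pos: "\<exists>j<n. v j \<noteq> 0 \<Longrightarrow> cnorm n v > 0"
proof -
  assume "\<exists>j<n. v j \<noteq> 0"
  then obtain j where j: "j < n" "v j \<noteq> 0" by blast
  have "0 < (cmod (v j))\<^sup>2" using j by simp
  also have "\<dots> \<le> (\<Sum>j<n. (cmod (v j))\<^sup>2)" using j by (intro member_le_sum) auto
  finally show ?thesis unfolding cnorm_def by simp
qed

lemma cnorm_zero: "cnorm n v = 0 \<Longrightarrow> j < n \<Longrightarrow> v j = 0"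
proof -
  assume "cnorm n v = 0" "j < n"
  then have "(\<Sum>j<n. (cmod (v j))\<^sup>2) = 0" using cnorm_sq[of n v] by simp
  then have "\<forall>j\<in>{..<n}. (cmod (v j))\<^sup>2 = 0" by (subst (asm) sum_nonneg_eq_0_iff) auto
  then show ?thesis using \<open>j < n\<close> by simp
qed

lemma ell_up: "cinner n a (unplus n (plusv n v)) = cinner n a v"
  by (rule cinner_cong) (rule unplus_plusv)

lemma fobj_nonneg: "fobj n m a xn w \<ge> 0"
  unfolding fobj_def by (simp add: sum_nonneg)

lemma key_ineq: "(2*\<alpha> + \<beta>) * (\<alpha> + \<beta>) \<ge> \<alpha>^2 - (5/4) * (\<beta>::real)^2"
proof -
  have "(2*\<alpha> + \<beta>) * (\<alpha> + \<beta>) - (\<alpha>^2 - (5/4) * \<beta>^2) = (\<alpha> + 3/2 * \<beta>)^2"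
    by (simp add: power2_eq_square algebra_simps)
  then show ?thesis by (smt (verit) zero_le_power2)
qed


lemma numeric:
  fixes d N Ng Nh :: real
  assumes d: "0 < d" "d \<le> 1/10" and N: "N > 0" and Nh: "0 \<le> Nh" "Nh < N/6" and Ng: "Ng \<ge> 0"
    and g: "(8 - 4*d) * N^4 \<le> (8 + 4*d) * Ng^4"
    and main: "(2 - 4*d) * Ng^2 * Nh^2 \<le> (5/4) * (8 + 4*d) * Nh^4"
  shows "Nh = 0"
proof (rule ccontr)
  assume "Nh \<noteq> 0"
  then have Nhp: "Nh^2 > 0" using Nh by simp
  have "(2 - 4*d) * Ng^2 * Nh^2 \<le> ((5/4) * (8 + 4*d) * Nh^2) * Nh^2" using main by (simp add: power4_eq_xxxx power2_eq_square mult_ac)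
  then have m2: "(2 - 4*d) * Ng^2 \<le> (5/4) * (8 + 4*d) * Nh^2" using Nhp by simp
  have "Nh^2 \<le> (N/6)^2" using Nh by (intro power_mono) auto
  then have "(5/4) * (8 + 4*d) * Nh^2 \<le> (5/4) * (8 + 4*d) * (N/6)^2" using d by (intro mult_left_mono) auto
  also have "\<dots> \<le> (21/2) * N^2 / 36" using d N by (simp add: power2_eq_square field_simps)
  finally have "(2 - 4*d) * Ng^2 \<le> (21/2) * N^2 / 36" using m2 by linarith
  moreover have "(8/5) * Ng^2 \<le> (2 - 4*d) * Ng^2" using d by (intro mult_right_mono) auto
  ultimately have "Ng^2 \<le> (21/2) * N^2 / 36 * (5/8)" by linarith
  then have "(Ng^2)^2 \<le> ((21/2) * N^2 / 36 * (5/8))^2" by (intro power_mono) auto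
  then have "Ng^4 \<le> (105/576)^2 * N^4" by (simp add: power2_eq_square power4_eq_xxxx field_simps)
  then have "(8 + 4*d) * Ng^4 \<le> (42/5) * ((105/576)^2 * N^4)" using d
    by (intro mult_mono) auto
  moreover have "(38/5) * N^4 \<le> (8 - 4*d) * N^4" using d N by (intro mult_right_mono) auto
  moreover have "N^4 > 0" using N by simp
  ultimately show False using g by (simp add: power2_eq_square)
qed


lemma cinner_diff: "cinner n (\<lambda>j. u j - v j) w = cinner n u w - cinner n v w"
  unfolding cinner_def by (simp add: algebra_simps sum_subtractf)

lemma cinner_add: "cinner n a (\<lambda>j. u j + v j) = cinner n a u + cinner n a v"
  unfolding cinner_def by (simp add: algebra_simps sum.distrib)

lemma cmod_add_sq: "(cmod (A + B))^2 = (cmod A)^2 + 2 * Re (A * cnj B) + (cmod B)^2"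
  by (simp only: cmod_power2) (simp add: power2_eq_square algebra_simps)

lemma re_add_cnj: "Re ((A + B) * cnj B) = Re (A * cnj B) + (cmod B)^2"
  by (simp only: cmod_power2) (simp add: power2_eq_square algebra_simps)

lemma phase_real: "s \<noteq> 0 \<Longrightarrow> cnj (s / of_real (cmod s)) * s = of_real (cmod s)"
proof -
  assume s: "s \<noteq> 0"
  have "cnj (s / of_real (cmod s)) * s = (cnj s * s) / of_real (cmod s)" by simp
  also have "cnj s * s = of_real ((cmod s)^2)" by (subst complex_norm_square) (simp add: mult.commute)
  also have "of_real ((cmod s)^2) / of_real (cmod s) = (of_real (cmod s) :: complex)"
    using s by (simp add: power2_eq_square)
  finally show ?thesis .
qed

lemma phase_norm: "cmod (if s = 0 then 1 else s / of_real (cmod s)) = 1"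
  by (simp add: norm_divide)


theorem proposition7:
  shows "\<exists>C2::real. C2 > 0 \<and>
    (\<forall>\<delta>0::real. \<delta>0 > 0 \<longrightarrow>
      (\<forall>(n::nat) (m::nat) (a::nat \<Rightarrow> nat \<Rightarrow> complex) (xn::nat \<Rightarrow> complex) (\<sigma>::real) (x::nat \<Rightarrow> complex).
         n \<ge> 1 \<longrightarrow> m \<ge> 1 \<longrightarrow> (\<exists>j<n. xn j \<noteq> 0) \<longrightarrow> \<sigma> > 0 \<longrightarrow>
         tens_opnorm (2*n) (\<lambda>i1 i2 i3 i4. tensT n m a \<sigma> i1 i2 i3 i4 - tensS i1 i2 i3 i4) < \<delta>0 \<longrightarrow>
         distG n m a xn x \<le> (16 - 5 * C2 * \<delta>0) / (192 + 4 * C2 * \<delta>0) * cnorm n xn \<longrightarrow>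
         (critical_point (2*n) (fobj n m a xn) (plusv n x) \<longleftrightarrow>
          global_minimizer (fobj n m a xn) (plusv n x))))"
proof (intro exI[of _ 32] conjI allI impI)
  show "(32::real) > 0" by simp
next
  fix \<delta>0 :: real and n m :: nat and a :: "nat \<Rightarrow> nat \<Rightarrow> complex" and xn :: "nat \<Rightarrow> complex" and \<sigma> :: real and x :: "nat \<Rightarrow> complex"
  assume d0: "\<delta>0 > 0" and n1: "n \<ge> 1" and m1: "m \<ge> 1" and xnz: "\<exists>j<n. xn j \<noteq> 0" and s0: "\<sigma> > 0"
    and op: "tens_opnorm (2*n) (\<lambda>i1 i2 i3 i4. tensT n m a \<sigma> i1 i2 i3 i4 - tensS i1 i2 i3 i4) < \<delta>0"
    and dist: "distG n m a xn x \<le> (16 - 5 * 32 * \<delta>0) / (192 + 4 * 32 * \<delta>0) * cnorm n xn"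
  define f where "f = fobj n m a xn"
  define c where "c = real m * \<sigma>^4"
  have c: "c > 0" using m1 s0 unfolding c_def by simp
  have HB: "\<And>u1 u2 u3 u4. \<bar>T4 n m a u1 u2 u3 u4 - c * S4 (2*n) u1 u2 u3 u4\<bar>
     \<le> c * \<delta>0 * (rnorm (2*n) u1 * rnorm (2*n) u2 * rnorm (2*n) u3 * rnorm (2*n) u4)"
    unfolding c_def by (rule hyp_bound[OF n1 m1 s0 op])
  define N where "N = cnorm n xn"
  have N: "N > 0" unfolding N_def using xnz by (rule cnorm_pos)
  have f0: "\<And>w. f w \<ge> 0" unfolding f_def by (rule fobj_nonneg)
  have fxn: "f (plusv n xn) = 0" unfolding f_def fobj_alt by simp
  have xnG: "xn \<in> Gmin n m a xn" unfolding Gmin_def global_minimizer_def f_def[symmetric]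
    using fxn f0 by simp
  define Dset where "Dset = (\<lambda>g. cnorm n (\<lambda>j. x j - g j)) ` Gmin n m a xn"
  have Dne: "Dset \<noteq> {}" unfolding Dset_def using xnG by blast
  have dG: "distG n m a xn x = Inf Dset" unfolding distG_def Dset_def ..
  have dnn: "distG n m a xn x \<ge> 0" unfolding dG
    by (rule cInf_greatest[OF Dne]) (auto simp: Dset_def cnorm_nonneg)
  have den: "192 + 4 * 32 * \<delta>0 > 0" using d0 by simp
  have kap: "(16 - 5 * 32 * \<delta>0) / (192 + 4 * 32 * \<delta>0) \<ge> 0"
  proof (rule ccontr)
    assume "\<not> ?thesis"
    then have "(16 - 5 * 32 * \<delta>0) / (192 + 4 * 32 * \<delta>0) * N < 0" using N by (intro mult_neg_pos) linarith+
    then show False using dist dnn unfolding N_def by linarith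
  qed
  then have "16 - 5 * 32 * \<delta>0 \<ge> 0" using den by (simp add: zero_le_divide_iff)
  then have d1: "\<delta>0 \<le> 1/10" by simp
  have "(16 - 5 * 32 * \<delta>0) / (192 + 4 * 32 * \<delta>0) \<le> 1/12"
    using den d0 by (simp add: divide_le_eq)
  then have "(16 - 5 * 32 * \<delta>0) / (192 + 4 * 32 * \<delta>0) * N \<le> 1/12 * N" using N by (intro mult_right_mono) auto
  then have "distG n m a xn x \<le> N/12" using dist unfolding N_def by simp
  then have "Inf Dset < N/6" unfolding dG using N by simp
  then obtain g0 where g0G: "g0 \<in> Gmin n m a xn" and g0d: "cnorm n (\<lambda>j. x j - g0 j) < N/6"
    using cInf_lessD[OF Dne] unfolding Dset_def by blast
  have "f (plusv n g0) \<le> f (plusv n xn)" using g0G unfolding Gmin_def global_minimizer_def f_def by blast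
  then have "(\<Sum>i<m. ((cmod (cinner n (a i) g0))\<^sup>2 - (cmod (cinner n (a i) xn))\<^sup>2)\<^sup>2) = 0"
    using fxn f0[of "plusv n g0"] unfolding f_def fobj_alt by linarith
  then have hg0: "\<And>i. i < m \<Longrightarrow> (cmod (cinner n (a i) g0))\<^sup>2 = (cmod (cinner n (a i) xn))\<^sup>2"
    by (subst (asm) sum_nonneg_eq_0_iff) auto
  define s where "s = cinner n x g0"
  define \<zeta> where "\<zeta> = (if s = 0 then 1 else s / of_real (cmod s))"
  define g where "g = (\<lambda>j. \<zeta> * g0 j)"
  define h where "h = (\<lambda>j. x j - g j)"
  have zeta: "cmod \<zeta> = 1" unfolding \<zeta>_def by (rule phase_norm)
  have hg: "\<And>i. i < m \<Longrightarrow> (cmod (cinner n (a i) g))\<^sup>2 = (cmod (cinner n (a i) xn))\<^sup>2"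
    unfolding g_def cinner_scale2 using hg0 zeta by (simp add: norm_mult)
  have ng: "cnorm n g = cnorm n g0" unfolding g_def cnorm_scale zeta by simp
  have xg: "cinner n x g = of_real (cmod s)"
  proof (cases "s = 0")
    case True then show ?thesis unfolding g_def cinner_scale2 s_def[symmetric] by simp
  next
    case False
    then have "\<zeta> = s / of_real (cmod s)" unfolding \<zeta>_def by simp
    then show ?thesis unfolding g_def cinner_scale2 s_def[symmetric]
      by (simp only:) (rule phase_real[OF False])
  qed
  have im: "Im (cinner n h g) = 0" unfolding h_def cinner_diff xg using cinner_self_im[of n g] by simp
  have "(cnorm n h)^2 = (cnorm n x)^2 + (cnorm n g0)^2 - 2 * cmod s"
    unfolding h_def cnorm_diff_sq xg ng by simp
  also have "\<dots> \<le> (cnorm n x)^2 + (cnorm n g0)^2 - 2 * Re s" using complex_Re_le_cmod[of s] by simp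
  also have "\<dots> = (cnorm n (\<lambda>j. x j - g0 j))^2" unfolding cnorm_diff_sq s_def ..
  finally have "cnorm n h \<le> cnorm n (\<lambda>j. x j - g0 j)"
    by (rule power2_le_imp_le) (simp add: cnorm_nonneg)
  then have Nh6: "cnorm n h < N/6" using g0d by simp
  have s4eq: "(\<Sum>i<m. (cmod (cinner n (a i) g))^4) = (\<Sum>i<m. (cmod (cinner n (a i) xn))^4)"
  proof (rule sum.cong[OF refl])
    fix i assume "i \<in> {..<m}"
    then have "(cmod (cinner n (a i) g))\<^sup>2 = (cmod (cinner n (a i) xn))\<^sup>2" using hg by simp
    then have "((cmod (cinner n (a i) g))\<^sup>2)^2 = ((cmod (cinner n (a i) xn))\<^sup>2)^2" by simp
    then show "(cmod (cinner n (a i) g))^4 = (cmod (cinner n (a i) xn))^4" by simp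
  qed
  have "c * ((8 - 4 * \<delta>0) * N^4) \<le> c * ((8 + 4 * \<delta>0) * (cnorm n g)^4)"
    using C1[OF HB, of g] C1[OF HB, of xn] s4eq unfolding N_def by (simp add: abs_le_iff algebra_simps)
  then have gN: "(8 - 4 * \<delta>0) * N^4 \<le> (8 + 4 * \<delta>0) * (cnorm n g)^4" using c by simp
  show "critical_point (2*n) (fobj n m a xn) (plusv n x) \<longleftrightarrow> global_minimizer (fobj n m a xn) (plusv n x)"
  proof
    assume crit: "critical_point (2*n) (fobj n m a xn) (plusv n x)"
    have D0: "\<And>k. k < 2*n \<Longrightarrow> Dk n m a xn (plusv n x) k = 0"
      using crit fobj_deriv DERIV_unique unfolding critical_point_def by blast
    have "(\<Sum>k<2*n. plusv n h k * Dk n m a xn (plusv n x) k) = 0" using D0 by simp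
    then have "(\<Sum>i<m. 4 * ((cmod (cinner n (a i) x))\<^sup>2 - (cmod (cinner n (a i) xn))\<^sup>2)
       * Re (cinner n (a i) x * cnj (cinner n (a i) h))) = 0"
      unfolding grad_identity ell_up .
    moreover have "x = (\<lambda>j. g j + h j)" unfolding h_def by simp
    ultimately have "(\<Sum>i<m. 4 * ((cmod (cinner n (a i) g + cinner n (a i) h))\<^sup>2 - (cmod (cinner n (a i) xn))\<^sup>2)
       * Re ((cinner n (a i) g + cinner n (a i) h) * cnj (cinner n (a i) h))) = 0"
      by (simp add: cinner_add)
    then have "(\<Sum>i<m. 4 * ((2 * Re (cinner n (a i) g * cnj (cinner n (a i) h)) + (cmod (cinner n (a i) h))\<^sup>2)
       * (Re (cinner n (a i) g * cnj (cinner n (a i) h)) + (cmod (cinner n (a i) h))\<^sup>2))) = 0"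
      unfolding cmod_add_sq re_add_cnj using hg by (simp add: algebra_simps)
    then have sum0: "(\<Sum>i<m. (2 * Re (cinner n (a i) g * cnj (cinner n (a i) h)) + (cmod (cinner n (a i) h))\<^sup>2)
       * (Re (cinner n (a i) g * cnj (cinner n (a i) h)) + (cmod (cinner n (a i) h))\<^sup>2)) = 0"
      by (simp add: sum_distrib_left[symmetric])
    have "(\<Sum>i<m. (Re (cinner n (a i) g * cnj (cinner n (a i) h)))^2 - (5/4) * ((cmod (cinner n (a i) h))\<^sup>2)^2) \<le> 0"
      unfolding sum0[symmetric] by (intro sum_mono key_ineq)
    then have al: "(\<Sum>i<m. (Re (cinner n (a i) g * cnj (cinner n (a i) h)))^2) \<le> (5/4) * (\<Sum>i<m. (cmod (cinner n (a i) h))^4)"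
      by (simp add: sum_subtractf sum_distrib_left)
    have "c * (2 - 4 * \<delta>0) * (cnorm n g)^2 * (cnorm n h)^2 \<le> (5/4) * (\<Sum>i<m. (cmod (cinner n (a i) h))^4)"
      using C2[OF HB c im] al by linarith
    also have "\<dots> \<le> (5/4) * (c * ((8 + 4 * \<delta>0) * (cnorm n h)^4))"
      using C1[OF HB, of h] by (simp add: abs_le_iff algebra_simps)
    finally have "c * ((2 - 4 * \<delta>0) * (cnorm n g)^2 * (cnorm n h)^2) \<le> c * ((5/4) * (8 + 4 * \<delta>0) * (cnorm n h)^4)"
      by (simp add: mult_ac)
    then have main: "(2 - 4 * \<delta>0) * (cnorm n g)^2 * (cnorm n h)^2 \<le> (5/4) * (8 + 4 * \<delta>0) * (cnorm n h)^4"
      using c by simp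
    have "cnorm n h = 0"
      by (rule numeric[OF d0 d1 N cnorm_nonneg Nh6 cnorm_nonneg gN main])
    then have xgj: "\<And>j. j < n \<Longrightarrow> x j = g j" using cnorm_zero unfolding h_def by fastforce
    have "fobj n m a xn (plusv n x) = (\<Sum>i<m. ((cmod (cinner n (a i) g))\<^sup>2 - (cmod (cinner n (a i) xn))\<^sup>2)\<^sup>2)"
      unfolding fobj_alt using cinner_cong[OF xgj] by simp
    also have "\<dots> = 0" using hg by simp
    finally show "global_minimizer (fobj n m a xn) (plusv n x)"
      unfolding global_minimizer_def using fobj_nonneg by simp
  next
    assume glob: "global_minimizer (fobj n m a xn) (plusv n x)"
    show "critical_point (2*n) (fobj n m a xn) (plusv n x)"
      unfolding critical_point_def
    proof (intro allI impI)
      fix k assume "k < 2*n"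
      have der: "((\<lambda>t. fobj n m a xn ((plusv n x)(k := plusv n x k + t))) has_real_derivative Dk n m a xn (plusv n x) k) (at 0)"
        by (rule fobj_deriv)
      have "Dk n m a xn (plusv n x) k = 0"
      proof (rule DERIV_local_min[OF der, of 1])
        show "\<forall>y. \<bar>0 - y\<bar> < 1 \<longrightarrow> fobj n m a xn ((plusv n x)(k := plusv n x k + 0)) \<le> fobj n m a xn ((plusv n x)(k := plusv n x k + y))"
          using glob unfolding global_minimizer_def by simp
      qed simp
      then show "((\<lambda>t. fobj n m a xn ((plusv n x)(k := plusv n x k + t))) has_real_derivative 0) (at 0)"
        using der by simp
    qed
  qed
qed


end
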